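(* Let $q\ge2$ and let $f$ be a $q$-regular sequence with a zero-insensitive minimal linear representation $(\mathbf{u},(M_i)_{0\le i<q},\mathbf{v})$, so that $f(n)=\mathbf{u}^t M_{n_0}M_{n_1}\cdots M_{n_L}\mathbf{v}$ where $n_L\cdots n_0$ is the $q$-ary expansion of $n$. Let $r$ be a nonnegative integer. Then the following are equivalent: (i) $f$ is $q$-quasimultiplicative with parameter $r$, i.e. $f(q^{k+r}a+b)=f(a)f(b)$ for all nonnegative integers $a,b,k$ with $0\le b<q^k$; (ii) $M_0^r=\mathbf{v}\mathbf{u}^t$.
   Context: A function $f$ on the nonnegative integers is $q$-regular if $f(n)=\mathbf{u}^t\mathbf{f}(n)$ for a vector $\mathbf{u}$ and a vector-valued function $\mathbf{f}$ for which there are square matrices $M_0,\dots,M_{q-1}$ with $\mathbf{f}(qn+i)=M_i\mathbf{f}(n)$ for all $0\le i<q$ and $qn+i>0$; set $\mathbf{v}=\mathbf{f}(0)$. Equivalently $f(n)=\mathbf{u}^t M_{n_0}M_{n_1}\cdots M_{n_L}\mathbf{v}$ for the $q$-ary expansion $n_L\cdots n_0$ of $n$. The triple $(\mathbf{u},(M_i)_{0\le i<q},\mathbf{v})$ is a linear representation of $f$; it is zero-insensitive if $M_0\mathbf{v}=\mathbf{v}$, and minimal if the dimension of the matrices is minimal among all linear representations of $f$. *)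

theory Defs
  imports "Jordan_Normal_Form.Matrix"
begin

function lr_vec :: "nat \<Rightarrow> (nat \<Rightarrow> 'a::comm_semiring_0 mat) \<Rightarrow> 'a vec \<Rightarrow> nat \<Rightarrow> 'a vec" where
  "lr_vec q M v n = (if n = 0 \<or> q < 2 then v else (M (n mod q)) *\<^sub>v (lr_vec q M v (n div q)))"
  by auto
termination
  by (relation "measure (\<lambda>(q, M, v, n). n)") auto

definition is_linrep :: "nat \<Rightarrow> (nat \<Rightarrow> 'a::comm_semiring_0) \<Rightarrow> nat \<Rightarrow> 'a vec \<Rightarrow> (nat \<Rightarrow> 'a mat) \<Rightarrow> 'a vec \<Rightarrow> bool" where
  "is_linrep q f d u M v \<longleftrightarrow>
     u \<in> carrier_vec d \<and> v \<in> carrier_vec d \<and> (\<forall>i<q. M i \<in> carrier_mat d d) \<and>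
     (\<forall>n. f n = u \<bullet> (lr_vec q M v n))"

definition minimal_linrep :: "nat \<Rightarrow> (nat \<Rightarrow> 'a::comm_semiring_0) \<Rightarrow> nat \<Rightarrow> 'a vec \<Rightarrow> (nat \<Rightarrow> 'a mat) \<Rightarrow> 'a vec \<Rightarrow> bool" where
  "minimal_linrep q f d u M v \<longleftrightarrow> is_linrep q f d u M v \<and>
     (\<forall>d' (u' :: 'a vec) M' v'. is_linrep q f d' u' M' v' \<longrightarrow> d \<le> d')"

definition zero_insensitive :: "(nat \<Rightarrow> 'a::comm_semiring_0 mat) \<Rightarrow> 'a vec \<Rightarrow> bool" where
  "zero_insensitive M v \<longleftrightarrow> M 0 *\<^sub>v v = v"

definition quasimultiplicative :: "nat \<Rightarrow> nat \<Rightarrow> (nat \<Rightarrow> 'a::times) \<Rightarrow> bool" where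
  "quasimultiplicative q r f \<longleftrightarrow>
     (\<forall>a b k. b < q ^ k \<longrightarrow> f (q ^ (k + r) * a + b) = f a * f b)"

definition outer_prod :: "'a::times vec \<Rightarrow> 'a vec \<Rightarrow> 'a mat" where
  "outer_prod v u = mat (dim_vec v) (dim_vec u) (\<lambda>(i, j). v $ i * u $ j)"

end

theory Submission imports Defs "Jordan_Normal_Form.VS_Connect" begin


lemma basis_list:
  fixes G :: "complex vec set"
  assumes G: "G \<subseteq> carrier_vec d"
  shows "\<exists>bs. set bs \<subseteq> G \<and> (\<forall>g\<in>G. \<exists>c\<in>carrier_vec (length bs). g = mat_of_cols d bs *\<^sub>v c)
     \<and> (length bs < d \<or> (\<forall>y\<in>carrier_vec d. \<exists>c\<in>carrier_vec (length bs). y = mat_of_cols d bs *\<^sub>v c))"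
proof -
  interpret vec_space "TYPE(complex)" d .
  let ?P = "\<lambda>S. S \<subseteq> G \<and> lin_indpt S"
  have bnd: "finite A \<and> card A \<le> d" if "?P A" for A
    using li_le_dim[of A] that G dim_is_n by auto
  have P0: "?P {}" by (simp add: lin_dep_def)
  obtain A where A: "finite A" "maximal A ?P" using maximal_exists[of ?P d "{}", OF bnd P0] by blast
  have AG: "A \<subseteq> G" and li: "lin_indpt A" using A(2) unfolding maximal_def by auto
  have AC: "A \<subseteq> carrier_vec d" using AG G by auto
  have spanG: "g \<in> span A" if g: "g \<in> G" for g
  proof (cases "g \<in> A")
    case True then show ?thesis using in_own_span[OF AC] by auto
  next
    case False
    show ?thesis
    proof (rule ccontr)
      assume "g \<notin> span A"
      hence "lin_indpt (A \<union> {g})" using lin_dep_iff_in_span[OF AC li _ False] g G by auto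
      hence "?P (A \<union> {g})" using AG g by auto
      hence "A \<union> {g} = A" using A(2) unfolding maximal_def by blast
      thus False using False by auto
    qed
  qed
  obtain bs where bs: "set bs = A" "distinct bs" using finite_distinct_list[OF A(1)] by blast
  have len: "length bs = card A" using bs distinct_card by metis
  have bsC: "set bs \<subseteq> carrier_vec d" using bs AC by auto
  have rep: "\<exists>c\<in>carrier_vec (length bs). y = mat_of_cols d bs *\<^sub>v c" if y: "y \<in> span A" for y
  proof -
    have "y \<in> span_list bs" using y span_list_as_span[OF bsC] bs by auto
    then obtain c where "y = lincomb_list c bs" unfolding span_list_def by auto
    also have "\<dots> = mat_of_cols d bs *\<^sub>v vec (length bs) c"
      by (rule lincomb_list_as_mat_mult, insert bsC, auto)
    finally show ?thesis by auto
  qed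
  have "card A \<le> d" using bnd[of A] AG li by auto
  moreover have "(\<forall>y\<in>carrier_vec d. \<exists>c\<in>carrier_vec (length bs). y = mat_of_cols d bs *\<^sub>v c)" if "card A = d"
  proof -
    have "basis A" using dim_li_is_basis[OF fin_dim A(1) _ li] AC that dim_is_n by auto
    hence "span A = carrier_vec d" unfolding basis_def by auto
    thus ?thesis using rep by auto
  qed
  ultimately show ?thesis using rep spanG bs(1) AG len by (intro exI[of _ bs]) auto
qed




lemma reduce:
  fixes A :: "nat \<Rightarrow> complex mat" and bs :: "complex vec list"
  assumes G: "G \<subseteq> carrier_vec d" and A: "\<And>i. i < q \<Longrightarrow> A i \<in> carrier_mat d d"
    and cl: "\<And>i g. i < q \<Longrightarrow> g \<in> G \<Longrightarrow> A i *\<^sub>v g \<in> G"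
    and x: "x \<in> G" and bsG: "set bs \<subseteq> G"
    and rep: "\<forall>g\<in>G. \<exists>c\<in>carrier_vec (length bs). g = mat_of_cols d bs *\<^sub>v c"
  shows "\<exists>A' x'. (\<forall>i<q. A' i \<in> carrier_mat (length bs) (length bs) \<and>
      A i * mat_of_cols d bs = mat_of_cols d bs * A' i) \<and> x' \<in> carrier_vec (length bs)
      \<and> mat_of_cols d bs *\<^sub>v x' = x"
proof -
  define e where "e = length bs"
  define B where "B = mat_of_cols d bs"
  have B: "B \<in> carrier_mat d e" unfolding B_def e_def by auto
  define coef where "coef g = (SOME c. c \<in> carrier_vec e \<and> g = B *\<^sub>v c)" for g
  have coef: "coef g \<in> carrier_vec e \<and> g = B *\<^sub>v coef g" if "g \<in> G" for g
  proof -
    have "\<exists>c. c \<in> carrier_vec e \<and> g = B *\<^sub>v c" using rep that unfolding B_def e_def by blast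
    from someI_ex[OF this] show ?thesis unfolding coef_def .
  qed
  define A' where "A' i = mat_of_cols e (map (\<lambda>b. coef (A i *\<^sub>v b)) bs)" for i
  have A'C: "A' i \<in> carrier_mat e e" for i unfolding A'_def e_def by auto
  have eq: "A i * B = B * A' i" if i: "i < q" for i
  proof (rule mat_col_eqI)
    fix j assume j: "j < dim_col (B * A' i)"
    hence j: "j < e" using B A'C[of i] by auto
    have bj: "bs ! j \<in> G" using bsG j unfolding e_def by auto
    have "col (A i * B) j = A i *\<^sub>v col B j" using A[OF i] B j by auto
    also have "col B j = bs ! j" unfolding B_def using j bj G unfolding e_def by auto
    also have "A i *\<^sub>v bs ! j = B *\<^sub>v coef (A i *\<^sub>v bs ! j)" using coef cl[OF i bj] by auto
    also have "coef (A i *\<^sub>v bs ! j) = col (A' i) j" unfolding A'_def using j coef[OF cl[OF i bj]]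
      unfolding e_def by auto
    also have "B *\<^sub>v col (A' i) j = col (B * A' i) j" using col_mult2[OF B A'C[of i] j] by simp
    finally show "col (A i * B) j = col (B * A' i) j" .
  qed (insert A[OF i] B A'C[of i], auto)
  show ?thesis using eq A'C coef[OF x] unfolding B_def e_def by metis
qed



declare lr_vec.simps[simp del]

lemma lr_carrier:
  assumes v: "v \<in> carrier_vec d" and M: "\<And>i. i < q \<Longrightarrow> M i \<in> carrier_mat d d"
  shows "lr_vec q M v n \<in> carrier_vec d"
proof (induction n rule: less_induct)
  case (less n)
  show ?case
  proof (cases "n = 0 \<or> q < 2")
    case True then show ?thesis using v by (subst lr_vec.simps) auto
  next
    case False
    hence "n mod q < q" "n div q < n" by auto
    then show ?thesis using False less M[of "n mod q"] by (subst lr_vec.simps) auto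
  qed
qed

lemma lr_sim:
  fixes N N' :: "nat \<Rightarrow> complex mat"
  assumes T: "T \<in> carrier_mat dy dx" and N: "\<And>i. i < q \<Longrightarrow> N i \<in> carrier_mat dx dx"
    and N': "\<And>i. i < q \<Longrightarrow> N' i \<in> carrier_mat dy dy"
    and com: "\<And>i. i < q \<Longrightarrow> T * N i = N' i * T"
    and x: "x \<in> carrier_vec dx" and y: "T *\<^sub>v x = y"
  shows "lr_vec q N' y n = T *\<^sub>v lr_vec q N x n"
proof (induction n rule: less_induct)
  case (less n)
  show ?case
  proof (cases "n = 0 \<or> q < 2")
    case True then show ?thesis using y by (subst (1 2) lr_vec.simps) auto
  next
    case False
    hence i: "n mod q < q" and lt: "n div q < n" by auto
    have c: "lr_vec q N x (n div q) \<in> carrier_vec dx" by (rule lr_carrier[OF x N])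
    have "lr_vec q N' y n = N' (n mod q) *\<^sub>v lr_vec q N' y (n div q)"
      using False by (subst lr_vec.simps) auto
    also have "\<dots> = N' (n mod q) *\<^sub>v (T *\<^sub>v lr_vec q N x (n div q))" using less lt by simp
    also have "\<dots> = (N' (n mod q) * T) *\<^sub>v lr_vec q N x (n div q)"
      using N'[OF i] T c by simp
    also have "\<dots> = (T * N (n mod q)) *\<^sub>v lr_vec q N x (n div q)" using com[OF i] by simp
    also have "\<dots> = T *\<^sub>v (N (n mod q) *\<^sub>v lr_vec q N x (n div q))"
      using N[OF i] T c by simp
    also have "N (n mod q) *\<^sub>v lr_vec q N x (n div q) = lr_vec q N x n"
      using False by (subst (2) lr_vec.simps) auto
    finally show ?thesis .
  qed
qed

lemma lr_step:
  assumes q: "q \<ge> 2" and i: "i < q" and z: "M 0 *\<^sub>v v = v"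
  shows "lr_vec q M v (q * n + i) = M i *\<^sub>v lr_vec q M v n"
proof (cases "q * n + i = 0")
  case True
  hence "n = 0" "i = 0" using q by auto
  then show ?thesis using z by (subst (1 2) lr_vec.simps) auto
next
  case False
  have "(q * n + i) mod q = i" "(q * n + i) div q = n" using i q by auto
  then show ?thesis using False q by (subst lr_vec.simps) auto
qed

fun Pm :: "nat \<Rightarrow> (nat \<Rightarrow> complex mat) \<Rightarrow> nat \<Rightarrow> nat \<Rightarrow> nat \<Rightarrow> complex mat" where
  "Pm q M d 0 b = 1\<^sub>m d"
| "Pm q M d (Suc k) b = M (b mod q) * Pm q M d k (b div q)"

lemma Pm_carrier:
  assumes q: "q \<ge> 2" and M: "\<And>i. i < q \<Longrightarrow> M i \<in> carrier_mat d d"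
  shows "Pm q M d k b \<in> carrier_mat d d"
proof (induction k arbitrary: b)
  case (Suc k)
  have "b mod q < q" using q by auto
  then show ?case using mult_carrier_mat[OF M[OF \<open>b mod q < q\<close>] Suc.IH[of "b div q"]] by simp
qed simp

lemma lr_Pm:
  assumes q: "q \<ge> 2" and M: "\<And>i. i < q \<Longrightarrow> M i \<in> carrier_mat d d"
    and v: "v \<in> carrier_vec d" and z: "M 0 *\<^sub>v v = v"
  shows "b < q ^ k \<Longrightarrow> lr_vec q M v (q ^ k * c + b) = Pm q M d k b *\<^sub>v lr_vec q M v c"
proof (induction k arbitrary: b)
  case 0
  then show ?case using lr_carrier[OF v M] by simp
next
  case (Suc k)
  have i: "b mod q < q" using q by auto
  have bd: "b div q < q ^ k" using Suc.prems q
    by (simp add: less_mult_imp_div_less mult.commute)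
  have "q ^ Suc k * c + b = q * (q ^ k * c + b div q) + b mod q"
    using div_mult_mod_eq[of b q] by (simp add: algebra_simps)
  hence "lr_vec q M v (q ^ Suc k * c + b) = M (b mod q) *\<^sub>v lr_vec q M v (q ^ k * c + b div q)"
    using lr_step[of q "b mod q" M v "q ^ k * c + b div q", OF q i z] by simp
  also have "\<dots> = M (b mod q) *\<^sub>v (Pm q M d k (b div q) *\<^sub>v lr_vec q M v c)" using Suc.IH[OF bd] by simp
  also have "\<dots> = Pm q M d (Suc k) b *\<^sub>v lr_vec q M v c"
    using assoc_mult_mat_vec[OF M[OF i] Pm_carrier[OF q M] lr_carrier[of v d q M c, OF v M]] by simp
  finally show ?case .
qed

lemma lr_pow:
  assumes q: "q \<ge> 2" and M: "\<And>i. i < q \<Longrightarrow> M i \<in> carrier_mat d d"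
    and v: "v \<in> carrier_vec d" and z: "M 0 *\<^sub>v v = v"
  shows "lr_vec q M v (q ^ r * a) = M 0 ^\<^sub>m r *\<^sub>v lr_vec q M v a"
proof (induction r arbitrary: a)
  case 0
  have "M 0 \<in> carrier_mat d d" using M q by auto
  then show ?case using lr_carrier[OF v M] by simp
next
  case (Suc r)
  have M0: "M 0 \<in> carrier_mat d d" using M q by auto
  have "lr_vec q M v (q ^ Suc r * a) = lr_vec q M v (q ^ r * (q * a + 0))" by (simp add: ac_simps)
  also have "\<dots> = M 0 ^\<^sub>m r *\<^sub>v (M 0 *\<^sub>v lr_vec q M v a)"
    using Suc.IH lr_step[of q 0 M v a] z q by simp
  also have "\<dots> = M 0 ^\<^sub>m Suc r *\<^sub>v lr_vec q M v a"
    using assoc_mult_mat_vec[OF pow_carrier_mat[OF M0] M0 lr_carrier[of v d q M a, OF v M]] by simp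
  finally show ?case .
qed

lemma Pm_M:
  assumes q: "q \<ge> 2" and M: "\<And>i. i < q \<Longrightarrow> M i \<in> carrier_mat d d" and i: "i < q"
  shows "b < q ^ k \<Longrightarrow> Pm q M d k b * M i = Pm q M d (Suc k) (b + q ^ k * i)"
proof (induction k arbitrary: b)
  case 0
  then show ?case using M[OF i] i by simp
next
  case (Suc k)
  have bm: "b mod q < q" using q by auto
  have bd: "b div q < q ^ k" using Suc.prems q
    by (simp add: less_mult_imp_div_less mult.commute)
  have qq: "q ^ Suc k * i = q * (q ^ k * i)" by simp
  have e1: "(b + q ^ Suc k * i) mod q = b mod q" unfolding qq by simp
  have e2: "(b + q ^ Suc k * i) div q = b div q + q ^ k * i" unfolding qq using q by simp
  have "Pm q M d (Suc k) b * M i = M (b mod q) * (Pm q M d k (b div q) * M i)"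
    using assoc_mult_mat[OF M[OF bm] Pm_carrier[OF q M] M[OF i]] by simp
  also have "\<dots> = Pm q M d (Suc (Suc k)) (b + q ^ Suc k * i)"
    using Suc.IH[OF bd] e1 e2 by simp
  finally show ?case .
qed

lemma outer_mult:
  fixes u v w :: "complex vec"
  assumes "u \<in> carrier_vec d" "w \<in> carrier_vec d"
  shows "outer_prod v u *\<^sub>v w = (u \<bullet> w) \<cdot>\<^sub>v v"
  using assms unfolding outer_prod_def
  by (intro eq_vecI) (auto simp: scalar_prod_def sum_distrib_left ac_simps)

lemma zero_on_span:
  fixes w :: "complex vec"
  assumes w: "w \<in> carrier_vec d" and bs: "set bs \<subseteq> carrier_vec d"
    and z: "\<And>b. b \<in> set bs \<Longrightarrow> w \<bullet> b = 0" and c: "c \<in> carrier_vec (length bs)"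
  shows "w \<bullet> (mat_of_cols d bs *\<^sub>v c) = 0"
proof -
  have B: "mat_of_cols d bs \<in> carrier_mat d (length bs)" by simp
  have "transpose_mat (mat_of_cols d bs) *\<^sub>v w = 0\<^sub>v (length bs)"
  proof (rule eq_vecI)
    fix j assume "j < dim_vec (0\<^sub>v (length bs) :: complex vec)"
    hence j: "j < length bs" by simp
    have "(transpose_mat (mat_of_cols d bs) *\<^sub>v w) $ j = col (mat_of_cols d bs) j \<bullet> w"
      using j by simp
    also have "col (mat_of_cols d bs) j = bs ! j" using j bs by (intro col_mat_of_cols) auto
    also have "bs ! j \<bullet> w = w \<bullet> bs ! j" using j bs w by (intro comm_scalar_prod) auto
    also have "\<dots> = 0" using z j by auto
    finally show "(transpose_mat (mat_of_cols d bs) *\<^sub>v w) $ j = 0\<^sub>v (length bs) $ j" using j by simp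
  qed simp
  hence "(transpose_mat (mat_of_cols d bs) *\<^sub>v w) \<bullet> c = 0" using c by simp
  thus ?thesis using transpose_vec_mult_scalar[OF B c w] by simp
qed




theorem theorem8:
  fixes q r d :: nat and f :: "nat \<Rightarrow> complex" and u v :: "complex vec"
    and M :: "nat \<Rightarrow> complex mat"
  assumes "q \<ge> 2"
    and "minimal_linrep q f d u M v"
    and "zero_insensitive M v"
  shows "quasimultiplicative q r f \<longleftrightarrow> M 0 ^\<^sub>m r = outer_prod v u"
proof -
  have q: "q \<ge> 2" by fact
  from assms(2) have lin: "is_linrep q f d u M v"
    and minl: "\<And>d' u' M' v'. is_linrep q f d' u' M' v' \<Longrightarrow> d \<le> d'"
    unfolding minimal_linrep_def by auto
  from lin have u: "u \<in> carrier_vec d" and v: "v \<in> carrier_vec d"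
    and MC: "\<And>i. i < q \<Longrightarrow> M i \<in> carrier_mat d d" and fr: "\<And>n. f n = u \<bullet> lr_vec q M v n"
    unfolding is_linrep_def by auto
  have z: "M 0 *\<^sub>v v = v" using assms(3) unfolding zero_insensitive_def .
  have M0: "M 0 \<in> carrier_mat d d" using MC q by auto
  have lrC: "\<And>n. lr_vec q M v n \<in> carrier_vec d" using lr_carrier[of v d q M] v MC by blast
  have PmC: "\<And>k b. Pm q M d k b \<in> carrier_mat d d" using Pm_carrier[OF q, of M d] MC by blast
  have OC: "outer_prod v u \<in> carrier_mat d d" using u v unfolding outer_prod_def by auto
  have lr0: "lr_vec q M v 0 = v" by (subst lr_vec.simps) simp
  have LP: "\<And>b k c. b < q ^ k \<Longrightarrow> lr_vec q M v (q ^ k * c + b) = Pm q M d k b *\<^sub>v lr_vec q M v c"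
    using lr_Pm[where q=q and M=M and d=d and v=v] q MC v z by blast
  have LPow: "\<And>a. lr_vec q M v (q ^ r * a) = M 0 ^\<^sub>m r *\<^sub>v lr_vec q M v a"
    using lr_pow[where q=q and M=M and d=d and v=v] q MC v z by blast
  have LS: "\<And>i n. i < q \<Longrightarrow> lr_vec q M v (q * n + i) = M i *\<^sub>v lr_vec q M v n"
    using lr_step[where q=q and M=M and v=v] q z by blast
  have PmM: "\<And>i b k. i < q \<Longrightarrow> b < q ^ k \<Longrightarrow> Pm q M d k b * M i = Pm q M d (Suc k) (b + q ^ k * i)"
    using Pm_M[where q=q and M=M and d=d] q MC by blast
  have A1: "u \<bullet> (Pm q M d k b *\<^sub>v (outer_prod v u *\<^sub>v lr_vec q M v a)) = f a * f b"
    if b: "b < q ^ k" for a k b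
  proof -
    have "outer_prod v u *\<^sub>v lr_vec q M v a = (u \<bullet> lr_vec q M v a) \<cdot>\<^sub>v v" by (rule outer_mult[OF u lrC])
    hence "Pm q M d k b *\<^sub>v (outer_prod v u *\<^sub>v lr_vec q M v a)
        = (u \<bullet> lr_vec q M v a) \<cdot>\<^sub>v (Pm q M d k b *\<^sub>v v)" using mult_mat_vec[OF PmC v] by simp
    moreover have "Pm q M d k b *\<^sub>v v = lr_vec q M v b"
      using LP[OF b, of 0] lr0 by simp
    ultimately show ?thesis using u lrC fr by simp
  qed
  have A2: "u \<bullet> (Pm q M d k b *\<^sub>v (M 0 ^\<^sub>m r *\<^sub>v lr_vec q M v a)) = f (q ^ (k + r) * a + b)"
    if b: "b < q ^ k" for a k b
  proof -
    have "q ^ (k + r) * a + b = q ^ k * (q ^ r * a) + b" by (simp add: power_add)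
    hence "lr_vec q M v (q ^ (k + r) * a + b) = Pm q M d k b *\<^sub>v lr_vec q M v (q ^ r * a)"
      using LP[OF b, of "q ^ r * a"] by (simp add: power_add mult.assoc)
    also have "\<dots> = Pm q M d k b *\<^sub>v (M 0 ^\<^sub>m r *\<^sub>v lr_vec q M v a)"
      using LPow by simp
    finally show ?thesis using fr by simp
  qed
  show ?thesis
  proof
    assume eq: "M 0 ^\<^sub>m r = outer_prod v u"
    show "quasimultiplicative q r f" unfolding quasimultiplicative_def
    proof (intro allI impI)
      fix a b k :: nat assume b: "b < q ^ k"
      show "f (q ^ (k + r) * a + b) = f a * f b" using A1[OF b] A2[OF b] eq by simp
    qed
  next
    assume QM: "quasimultiplicative q r f"
    define D where "D = M 0 ^\<^sub>m r - outer_prod v u"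
    have DC: "D \<in> carrier_mat d d" unfolding D_def using M0 OC by auto
    have key: "u \<bullet> (Pm q M d k b *\<^sub>v (D *\<^sub>v lr_vec q M v a)) = 0" if b: "b < q ^ k" for a k b
    proof -
      have "D *\<^sub>v lr_vec q M v a = M 0 ^\<^sub>m r *\<^sub>v lr_vec q M v a - outer_prod v u *\<^sub>v lr_vec q M v a"
        unfolding D_def using minus_mult_distrib_mat_vec[OF pow_carrier_mat[OF M0] OC lrC] by simp
      hence "Pm q M d k b *\<^sub>v (D *\<^sub>v lr_vec q M v a) =
          Pm q M d k b *\<^sub>v (M 0 ^\<^sub>m r *\<^sub>v lr_vec q M v a) - Pm q M d k b *\<^sub>v (outer_prod v u *\<^sub>v lr_vec q M v a)"
        using mult_minus_distrib_mat_vec[OF PmC, of "M 0 ^\<^sub>m r *\<^sub>v lr_vec q M v a" "outer_prod v u *\<^sub>v lr_vec q M v a"]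
          mult_mat_vec_carrier[OF pow_carrier_mat[OF M0] lrC] mult_mat_vec_carrier[OF OC lrC] by simp
      hence "u \<bullet> (Pm q M d k b *\<^sub>v (D *\<^sub>v lr_vec q M v a)) =
          u \<bullet> (Pm q M d k b *\<^sub>v (M 0 ^\<^sub>m r *\<^sub>v lr_vec q M v a)) - u \<bullet> (Pm q M d k b *\<^sub>v (outer_prod v u *\<^sub>v lr_vec q M v a))"
        using scalar_prod_minus_distrib[OF u, of "Pm q M d k b *\<^sub>v (M 0 ^\<^sub>m r *\<^sub>v lr_vec q M v a)"
            "Pm q M d k b *\<^sub>v (outer_prod v u *\<^sub>v lr_vec q M v a)"]
          mult_mat_vec_carrier[OF PmC mult_mat_vec_carrier[OF pow_carrier_mat[OF M0] lrC]]
          mult_mat_vec_carrier[OF PmC mult_mat_vec_carrier[OF OC lrC]] by simp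
      also have "\<dots> = 0" using A1[OF b] A2[OF b] QM b unfolding quasimultiplicative_def by simp
      finally show ?thesis .
    qed
    let ?G1 = "range (lr_vec q M v)"
    obtain bs where bsG: "set bs \<subseteq> ?G1"
      and bsrep: "\<forall>g\<in>?G1. \<exists>c\<in>carrier_vec (length bs). g = mat_of_cols d bs *\<^sub>v c"
      and bs3: "length bs < d \<or> (\<forall>y\<in>carrier_vec d. \<exists>c\<in>carrier_vec (length bs). y = mat_of_cols d bs *\<^sub>v c)"
      using basis_list[of ?G1 d] lrC by blast
    have full1: "\<forall>y\<in>carrier_vec d. \<exists>c\<in>carrier_vec (length bs). y = mat_of_cols d bs *\<^sub>v c"
    proof -
      have False if lt: "length bs < d"
      proof -
        have cl: "M i *\<^sub>v g \<in> ?G1" if "i < q" "g \<in> ?G1" for i g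
        proof -
          from that(2) obtain n where "g = lr_vec q M v n" by auto
          hence "M i *\<^sub>v g = lr_vec q M v (q * n + i)" using LS[OF that(1)] by simp
          thus ?thesis by simp
        qed
        have G1C: "?G1 \<subseteq> carrier_vec d" using lrC by auto
        have vG1: "v \<in> ?G1" using lr0 by (metis rangeI)
        obtain A' x' where A': "\<forall>i<q. A' i \<in> carrier_mat (length bs) (length bs) \<and>
            M i * mat_of_cols d bs = mat_of_cols d bs * A' i" and x': "x' \<in> carrier_vec (length bs)"
            and Bx: "mat_of_cols d bs *\<^sub>v x' = v"
          using reduce[of ?G1 d q M v bs, OF G1C MC cl vG1 bsG bsrep] by blast
        let ?B = "mat_of_cols d bs"
        have B: "?B \<in> carrier_mat d (length bs)" by simp
        have "is_linrep q f (length bs) (transpose_mat ?B *\<^sub>v u) A' x'"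
          unfolding is_linrep_def
        proof (intro conjI allI impI)
          show "transpose_mat ?B *\<^sub>v u \<in> carrier_vec (length bs)"
            using mult_mat_vec_carrier[OF transpose_carrier_mat[THEN iffD2, OF B] u] .
          show "x' \<in> carrier_vec (length bs)" by fact
          show "A' i \<in> carrier_mat (length bs) (length bs)" if "i < q" for i using A' that by auto
          fix n
          have l': "lr_vec q A' x' n \<in> carrier_vec (length bs)"
            using lr_carrier[of x' "length bs" q A' n] x' A' by blast
          have "lr_vec q M v n = ?B *\<^sub>v lr_vec q A' x' n"
            using lr_sim[of ?B d "length bs" q A' M x' v n] B A' MC x' Bx by auto
          thus "f n = (transpose_mat ?B *\<^sub>v u) \<bullet> lr_vec q A' x' n"
            using fr transpose_vec_mult_scalar[OF B l' u] by simp
        qed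
        from minl[OF this] lt show False by simp
      qed
      thus ?thesis using bs3 by blast
    qed
    have step1: "u \<bullet> (Pm q M d k b *\<^sub>v (D *\<^sub>v y)) = 0" if b: "b < q ^ k" and y: "y \<in> carrier_vec d" for k b y
    proof -
      define w where "w = transpose_mat (Pm q M d k b * D) *\<^sub>v u"
      have PD: "Pm q M d k b * D \<in> carrier_mat d d" using mult_carrier_mat[OF PmC DC] .
      have wy: "w \<bullet> x = u \<bullet> (Pm q M d k b *\<^sub>v (D *\<^sub>v x))" if "x \<in> carrier_vec d" for x
        unfolding w_def using transpose_vec_mult_scalar[OF PD that u] assoc_mult_mat_vec[OF PmC DC that] by simp
      have wC: "w \<in> carrier_vec d" unfolding w_def
        using mult_mat_vec_carrier[OF transpose_carrier_mat[THEN iffD2, OF PD] u] .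
      obtain c where c: "c \<in> carrier_vec (length bs)" "y = mat_of_cols d bs *\<^sub>v c" using full1 y by blast
      have "w \<bullet> y = 0" unfolding c(2)
      proof (rule zero_on_span[OF wC _ _ c(1)])
        show "set bs \<subseteq> carrier_vec d" using bsG lrC by auto
        fix g assume "g \<in> set bs"
        then obtain a where "g = lr_vec q M v a" using bsG by auto
        thus "w \<bullet> g = 0" using wy[OF lrC] key[OF b] by simp
      qed
      thus ?thesis using wy[OF y] by simp
    qed
    define G2 where "G2 = {transpose_mat (Pm q M d k b) *\<^sub>v u | k b. b < q ^ k}"
    have G2C: "G2 \<subseteq> carrier_vec d" unfolding G2_def
      using mult_mat_vec_carrier[OF transpose_carrier_mat[THEN iffD2, OF PmC] u] by auto
    have uG2: "u \<in> G2" unfolding G2_def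
      by (rule CollectI, rule exI[of _ 0], rule exI[of _ 0]) (use u in simp)
    have cl2: "transpose_mat (M i) *\<^sub>v g \<in> G2" if i: "i < q" and g: "g \<in> G2" for i g
    proof -
      from g obtain k b where b: "b < q ^ k" and gd: "g = transpose_mat (Pm q M d k b) *\<^sub>v u"
        unfolding G2_def by auto
      have "transpose_mat (M i) *\<^sub>v g = (transpose_mat (M i) * transpose_mat (Pm q M d k b)) *\<^sub>v u"
        unfolding gd using assoc_mult_mat_vec[OF transpose_carrier_mat[THEN iffD2, OF MC[OF i]]
          transpose_carrier_mat[THEN iffD2, OF PmC] u] by simp
      also have "transpose_mat (M i) * transpose_mat (Pm q M d k b) = transpose_mat (Pm q M d k b * M i)"
        using transpose_mult[OF PmC MC[OF i]] by simp
      also have "Pm q M d k b * M i = Pm q M d (Suc k) (b + q ^ k * i)" using PmM[OF i b] .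
      finally have e: "transpose_mat (M i) *\<^sub>v g = transpose_mat (Pm q M d (Suc k) (b + q ^ k * i)) *\<^sub>v u" .
      have "b + q ^ k * i < q ^ k + q ^ k * i" using b by simp
      also have "\<dots> = q ^ k * (i + 1)" by (simp add: algebra_simps)
      also have "\<dots> \<le> q ^ k * q" using i by (intro mult_le_mono2) simp
      finally have "b + q ^ k * i < q ^ Suc k" by (simp add: mult.commute)
      thus ?thesis unfolding e G2_def by blast
    qed
    obtain bs2 where bs2G: "set bs2 \<subseteq> G2"
      and bs2rep: "\<forall>g\<in>G2. \<exists>c\<in>carrier_vec (length bs2). g = mat_of_cols d bs2 *\<^sub>v c"
      and bs23: "length bs2 < d \<or> (\<forall>y\<in>carrier_vec d. \<exists>c\<in>carrier_vec (length bs2). y = mat_of_cols d bs2 *\<^sub>v c)"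
      using basis_list[OF G2C] by blast
    have full2: "\<forall>y\<in>carrier_vec d. \<exists>c\<in>carrier_vec (length bs2). y = mat_of_cols d bs2 *\<^sub>v c"
    proof -
      have False if lt: "length bs2 < d"
      proof -
        have MT: "\<And>i. i < q \<Longrightarrow> transpose_mat (M i) \<in> carrier_mat d d" using MC by simp
        obtain A' x' where A': "\<forall>i<q. A' i \<in> carrier_mat (length bs2) (length bs2) \<and>
            transpose_mat (M i) * mat_of_cols d bs2 = mat_of_cols d bs2 * A' i" and x': "x' \<in> carrier_vec (length bs2)"
            and Bx: "mat_of_cols d bs2 *\<^sub>v x' = u"
          using reduce[of G2 d q "\<lambda>i. transpose_mat (M i)" u bs2, OF G2C MT cl2 uG2 bs2G bs2rep] by blast
        let ?B = "mat_of_cols d bs2"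
        let ?e = "length bs2"
        have B: "?B \<in> carrier_mat d ?e" by simp
        have BT: "transpose_mat ?B \<in> carrier_mat ?e d" by simp
        have com: "transpose_mat ?B * M i = transpose_mat (A' i) * transpose_mat ?B" if i: "i < q" for i
        proof -
          have "transpose_mat (transpose_mat (M i) * ?B) = transpose_mat (?B * A' i)" using A' i by simp
          moreover have "transpose_mat (transpose_mat (M i) * ?B) = transpose_mat ?B * M i"
            using transpose_mult[OF MT[OF i] B] by simp
          moreover have "transpose_mat (?B * A' i) = transpose_mat (A' i) * transpose_mat ?B"
            using transpose_mult[OF B, of "A' i" ?e] A' i by simp
          ultimately show ?thesis by simp
        qed
        have "is_linrep q f ?e x' (\<lambda>i. transpose_mat (A' i)) (transpose_mat ?B *\<^sub>v v)"
          unfolding is_linrep_def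
        proof (intro conjI allI impI)
          show "transpose_mat ?B *\<^sub>v v \<in> carrier_vec ?e" using mult_mat_vec_carrier[OF BT v] .
          show "x' \<in> carrier_vec ?e" by fact
          show "transpose_mat (A' i) \<in> carrier_mat ?e ?e" if "i < q" for i using A' that by auto
          fix n
          have "lr_vec q (\<lambda>i. transpose_mat (A' i)) (transpose_mat ?B *\<^sub>v v) n = transpose_mat ?B *\<^sub>v lr_vec q M v n"
            using lr_sim[of "transpose_mat ?B" ?e d q M "\<lambda>i. transpose_mat (A' i)" v "transpose_mat ?B *\<^sub>v v" n]
              BT MC A' com v by auto
          moreover have "f n = (transpose_mat (transpose_mat ?B) *\<^sub>v x') \<bullet> lr_vec q M v n"
            using fr Bx by simp
          moreover have "(transpose_mat (transpose_mat ?B) *\<^sub>v x') \<bullet> lr_vec q M v n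
              = x' \<bullet> (transpose_mat ?B *\<^sub>v lr_vec q M v n)"
            by (rule transpose_vec_mult_scalar[OF BT lrC x'])
          ultimately show "f n = x' \<bullet> lr_vec q (\<lambda>i. transpose_mat (A' i)) (transpose_mat ?B *\<^sub>v v) n"
            by simp
        qed
        from minl[OF this] lt show False by simp
      qed
      thus ?thesis using bs23 by blast
    qed
    have step2: "D *\<^sub>v y = 0\<^sub>v d" if y: "y \<in> carrier_vec d" for y
    proof (rule eq_vecI)
      define zz where "zz = D *\<^sub>v y"
      have zC: "zz \<in> carrier_vec d" unfolding zz_def using DC y by simp
      have zg: "zz \<bullet> g = 0" if "g \<in> set bs2" for g
      proof -
        from that bs2G obtain k b where b: "b < q ^ k" and gd: "g = transpose_mat (Pm q M d k b) *\<^sub>v u"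
          unfolding G2_def by auto
        have gC: "g \<in> carrier_vec d" unfolding gd
          using mult_mat_vec_carrier[OF transpose_carrier_mat[THEN iffD2, OF PmC] u] .
        have "zz \<bullet> g = g \<bullet> zz" using comm_scalar_prod[OF zC gC] .
        also have "\<dots> = u \<bullet> (Pm q M d k b *\<^sub>v zz)" unfolding gd by (rule transpose_vec_mult_scalar[OF PmC zC u])
        also have "\<dots> = 0" unfolding zz_def by (rule step1[OF b y])
        finally show ?thesis .
      qed
      fix i assume "i < dim_vec (0\<^sub>v d :: complex vec)"
      hence i: "i < d" by simp
      obtain c where c: "c \<in> carrier_vec (length bs2)" "unit_vec d i = mat_of_cols d bs2 *\<^sub>v c"
        using full2 i by (meson unit_vec_carrier)
      have "zz \<bullet> unit_vec d i = 0" unfolding c(2)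
        by (rule zero_on_span[OF zC _ zg c(1)]) (use bs2G G2C in auto)
      thus "(D *\<^sub>v y) $ i = 0\<^sub>v d $ i" using i unfolding zz_def by simp
    qed (use DC in simp)
    show "M 0 ^\<^sub>m r = outer_prod v u"
    proof (rule eq_matI)
      fix i j assume i: "i < dim_row (outer_prod v u)" and j: "j < dim_col (outer_prod v u)"
      hence i: "i < d" and j: "j < d" using OC by auto
      have "D $$ (i, j) = (D *\<^sub>v unit_vec d j) $ i" using DC i j by simp
      also have "\<dots> = 0" using step2[of "unit_vec d j"] i by simp
      finally have "D $$ (i, j) = 0" .
      thus "(M 0 ^\<^sub>m r) $$ (i, j) = outer_prod v u $$ (i, j)"
        unfolding D_def using i j M0 OC by simp
    qed (use M0 OC in auto)
  qed
qed


end
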